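(* Let $n\geq 3$ and let $f(\overleftrightarrow{K}_{n})$ be the smallest integer such that every arc-colored complete digraph $\overleftrightarrow{K}_{n}$ with $c(\overleftrightarrow{K}_{n})\geq f(\overleftrightarrow{K}_{n})$ contains a rainbow triangle. Then \[f(\overleftrightarrow{K}_{n})=\begin{cases} \lfloor\frac{n^{2}}{4}\rfloor+3,&\text{if } n=3, 4;\\ \lfloor\frac{n^{2}}{4}\rfloor+2,&\text{if } n\geq 5. \end{cases}\]
   Context: All digraphs are finite, without loops or multiple arcs (a pair of opposite arcs $xy,yx$ is allowed). The complete digraph $\overleftrightarrow{K}_{n}$ is obtained from $K_n$ by replacing each edge $xy$ by the two arcs $xy$ and $yx$. An arc-coloring of a digraph $D$ is any map $C:A(D)\to\mathbb{N}$; $c(D)$ denotes the number of distinct colors used on the arcs of $D$. A rainbow triangle is a directed triangle (directed cycle of length 3) whose three arcs have pairwise distinct colors. *)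

theory Defs
  imports Main
begin

definition arcs :: "nat \<Rightarrow> (nat \<times> nat) set" where
  "arcs n = {(x, y). x < n \<and> y < n \<and> x \<noteq> y}"

definition num_colors :: "nat \<Rightarrow> (nat \<times> nat \<Rightarrow> nat) \<Rightarrow> nat" where
  "num_colors n C = card (C ` arcs n)"

definition has_rainbow_triangle :: "nat \<Rightarrow> (nat \<times> nat \<Rightarrow> nat) \<Rightarrow> bool" where
  "has_rainbow_triangle n C \<longleftrightarrow>
     (\<exists>x y z. x < n \<and> y < n \<and> z < n \<and> x \<noteq> y \<and> y \<noteq> z \<and> z \<noteq> x \<and>
        C (x, y) \<noteq> C (y, z) \<and> C (y, z) \<noteq> C (z, x) \<and> C (z, x) \<noteq> C (x, y))"

definition f_rainbow :: "nat \<Rightarrow> nat" where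
  "f_rainbow n = (LEAST k. \<forall>C :: nat \<times> nat \<Rightarrow> nat. num_colors n C \<ge> k \<longrightarrow> has_rainbow_triangle n C)"

end

theory Submission
  imports Defs
begin


definition arcsV :: "nat set \<Rightarrow> (nat \<times> nat) set" where
  "arcsV V = {(x, y). x \<in> V \<and> y \<in> V \<and> x \<noteq> y}"

definition rf :: "nat set \<Rightarrow> (nat \<times> nat \<Rightarrow> nat) \<Rightarrow> bool" where
  "rf V C \<longleftrightarrow> (\<forall>x\<in>V. \<forall>y\<in>V. \<forall>z\<in>V. x \<noteq> y \<longrightarrow> y \<noteq> z \<longrightarrow> z \<noteq> x \<longrightarrow>
      \<not> (C (x, y) \<noteq> C (y, z) \<and> C (y, z) \<noteq> C (z, x) \<and> C (z, x) \<noteq> C (x, y)))"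

definition QQ :: "nat set \<Rightarrow> (nat \<times> nat \<Rightarrow> nat) \<Rightarrow> nat \<Rightarrow> nat set" where
  "QQ V C v = {c \<in> C ` arcsV V. \<forall>x y. (x, y) \<in> arcsV V \<longrightarrow> C (x, y) = c \<longrightarrow> x = v \<or> y = v}"

lemma finite_arcsV: "finite V \<Longrightarrow> finite (arcsV V)"
  by (rule finite_subset[of _ "V \<times> V"]) (auto simp: arcsV_def)

lemma arcsV_Sigma: "arcsV V = Sigma V (\<lambda>x. V - {x})"
  by (auto simp: arcsV_def)

lemma card_arcsV: "finite V \<Longrightarrow> card (arcsV V) = card V * (card V - 1)"
  by (simp add: arcsV_Sigma)

lemma rfD: "rf V C \<Longrightarrow> x \<in> V \<Longrightarrow> y \<in> V \<Longrightarrow> z \<in> V \<Longrightarrow> x \<noteq> y \<Longrightarrow> y \<noteq> z \<Longrightarrow> z \<noteq> x \<Longrightarrow>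
   C (x, y) = C (y, z) \<or> C (y, z) = C (z, x) \<or> C (z, x) = C (x, y)"
  unfolding rf_def by blast

lemma rf_sub: "rf V C \<Longrightarrow> W \<subseteq> V \<Longrightarrow> rf W C"
  unfolding rf_def by blast

lemma finite_QQ: "finite V \<Longrightarrow> finite (QQ V C v)"
  unfolding QQ_def using finite_arcsV by auto

lemma colors_split:
  assumes "finite V"
  shows "card (C ` arcsV V) \<le> card (C ` arcsV (V - {v})) + card (QQ V C v)"
proof -
  have "C ` arcsV V \<subseteq> C ` arcsV (V - {v}) \<union> QQ V C v"
  proof
    fix c assume "c \<in> C ` arcsV V"
    show "c \<in> C ` arcsV (V - {v}) \<union> QQ V C v"
    proof (cases "c \<in> QQ V C v")
      case False
      then obtain x y where "(x, y) \<in> arcsV V" "C (x, y) = c" "x \<noteq> v" "y \<noteq> v"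
        using \<open>c \<in> C ` arcsV V\<close> unfolding QQ_def by blast
      then have "(x, y) \<in> arcsV (V - {v})" by (auto simp: arcsV_def)
      then show ?thesis using \<open>C (x, y) = c\<close> by blast
    qed simp
  qed
  then have "card (C ` arcsV V) \<le> card (C ` arcsV (V - {v}) \<union> QQ V C v)"
    by (intro card_mono) (auto intro: finite_arcsV finite_QQ assms)
  also have "\<dots> \<le> card (C ` arcsV (V - {v})) + card (QQ V C v)" by (rule card_Un_le)
  finally show ?thesis .
qed

definition revC :: "(nat \<times> nat \<Rightarrow> nat) \<Rightarrow> (nat \<times> nat \<Rightarrow> nat)" where
  "revC C = (\<lambda>p. C (snd p, fst p))"

lemma revC_simp[simp]: "revC C (x, y) = C (y, x)" by (simp add: revC_def)

lemma rf_revC: "rf V C \<Longrightarrow> rf V (revC C)"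
  unfolding rf_def revC_simp by metis

lemma image_revC: "revC C ` arcsV V = C ` arcsV V"
proof -
  have "revC C ` arcsV V = C ` (prod.swap ` arcsV V)" by (auto simp: revC_def image_image prod.swap_def)
  moreover have "prod.swap ` arcsV V = arcsV V" by (auto simp: arcsV_def image_iff)
  ultimately show ?thesis by simp
qed

lemma QQ_revC: "QQ V (revC C) v = QQ V C v"
  unfolding QQ_def image_revC by (auto simp: arcsV_def)



lemma QQ_arc: "c \<in> QQ V C v \<Longrightarrow> (x, y) \<in> arcsV V \<Longrightarrow> C (x, y) = c \<Longrightarrow> x = v \<or> y = v"
  unfolding QQ_def by blast

lemma QQ_obtain: "c \<in> QQ V C v \<Longrightarrow> (\<exists>s. (v, s) \<in> arcsV V \<and> C (v, s) = c) \<or> (\<exists>t. (t, v) \<in> arcsV V \<and> C (t, v) = c)"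
  unfolding QQ_def by auto

lemma QQ_F:
  assumes rf: "rf V C" and s: "(v, s) \<in> arcsV V" "C (v, s) \<in> QQ V C v"
    and t: "(t, v) \<in> arcsV V" "C (t, v) \<in> QQ V C v" and st: "s \<noteq> t"
  shows "C (v, s) = C (t, v)"
proof -
  have V: "v \<in> V" "s \<in> V" "t \<in> V" "v \<noteq> s" "t \<noteq> v" using s t by (auto simp: arcsV_def)
  have st_arc: "(s, t) \<in> arcsV V" using V st by (auto simp: arcsV_def)
  have "C (s, t) \<noteq> C (v, s)" using QQ_arc[OF s(2) st_arc] V by auto
  moreover have "C (s, t) \<noteq> C (t, v)" using QQ_arc[OF t(2) st_arc] V by auto
  ultimately show ?thesis using rfD[OF rf V(1) V(2) V(3) V(4) st V(5)] by auto
qed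

lemma card_le2: "A \<subseteq> {a, b} \<Longrightarrow> card A \<le> 2"
proof -
  assume "A \<subseteq> {a, b}"
  then have "card A \<le> card {a, b}" by (intro card_mono) auto
  also have "\<dots> \<le> 2" by (simp add: card_insert_if)
  finally show ?thesis .
qed

lemma mixed:
  assumes rf: "rf V C" and x: "(v, x) \<in> arcsV V" "C (v, x) \<in> QQ V C v"
    and y: "(y, v) \<in> arcsV V" "C (y, v) \<in> QQ V C v"
  shows "card (QQ V C v) \<le> 2"
proof (cases "x = y")
  case True
  have "QQ V C v \<subseteq> {C (v, x), C (y, v)}"
  proof
    fix c assume c: "c \<in> QQ V C v"
    from QQ_obtain[OF c] show "c \<in> {C (v, x), C (y, v)}"
    proof
      assume "\<exists>s. (v, s) \<in> arcsV V \<and> C (v, s) = c"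
      then obtain s where s: "(v, s) \<in> arcsV V" "C (v, s) = c" by blast
      show ?thesis
      proof (cases "s = x")
        case False
        then have "C (v, s) = C (y, v)" using QQ_F[OF rf s(1) _ y] s c True by auto
        then show ?thesis using s by auto
      qed (use s in auto)
    next
      assume "\<exists>t. (t, v) \<in> arcsV V \<and> C (t, v) = c"
      then obtain t where t: "(t, v) \<in> arcsV V" "C (t, v) = c" by blast
      show ?thesis
      proof (cases "t = y")
        case False
        then have "C (v, x) = C (t, v)" using QQ_F[OF rf x t(1)] t c True by auto
        then show ?thesis using t by auto
      qed (use t in auto)
    qed
  qed
  then show ?thesis by (rule card_le2)
next
  case False
  have a: "C (v, x) = C (y, v)" using QQ_F[OF rf x y False] .
  have sub: "QQ V C v \<subseteq> {C (v, x), C (v, y), C (x, v)}"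
  proof
    fix c assume c: "c \<in> QQ V C v"
    from QQ_obtain[OF c] show "c \<in> {C (v, x), C (v, y), C (x, v)}"
    proof
      assume "\<exists>s. (v, s) \<in> arcsV V \<and> C (v, s) = c"
      then obtain s where s: "(v, s) \<in> arcsV V" "C (v, s) = c" by blast
      show ?thesis
      proof (cases "s = y")
        case False
        then have "C (v, s) = C (y, v)" using QQ_F[OF rf s(1) _ y] s c by auto
        then show ?thesis using s a by auto
      qed (use s in auto)
    next
      assume "\<exists>t. (t, v) \<in> arcsV V \<and> C (t, v) = c"
      then obtain t where t: "(t, v) \<in> arcsV V" "C (t, v) = c" by blast
      show ?thesis
      proof (cases "t = x")
        case False
        then have "C (v, x) = C (t, v)" using QQ_F[OF rf x t(1)] t c by auto
        then show ?thesis using t by auto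
      qed (use t in auto)
    qed
  qed
  show ?thesis
  proof (cases "C (v, y) \<in> QQ V C v \<and> C (x, v) \<in> QQ V C v")
    case True
    have vy: "(v, y) \<in> arcsV V" "(x, v) \<in> arcsV V" using x y by (auto simp: arcsV_def)
    have "C (v, y) = C (x, v)" using QQ_F[OF rf vy(1) _ vy(2)] True False by auto
    then have "QQ V C v \<subseteq> {C (v, x), C (v, y)}" using sub by auto
    then show ?thesis by (rule card_le2)
  next
    case nf: False
    show ?thesis
    proof (cases "C (v, y) \<in> QQ V C v")
      case True
      then have "QQ V C v \<subseteq> {C (v, x), C (v, y)}" using sub nf by auto
      then show ?thesis by (rule card_le2)
    next
      case False
      then have "QQ V C v \<subseteq> {C (v, x), C (x, v)}" using sub by auto
      then show ?thesis by (rule card_le2)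
    qed
  qed
qed



definition src :: "nat set \<Rightarrow> (nat \<times> nat \<Rightarrow> nat) \<Rightarrow> nat \<Rightarrow> bool" where
  "src V C v \<longleftrightarrow> (\<forall>t. (t, v) \<in> arcsV V \<longrightarrow> C (t, v) \<notin> QQ V C v)"

definition XX :: "nat set \<Rightarrow> (nat \<times> nat \<Rightarrow> nat) \<Rightarrow> nat \<Rightarrow> nat set" where
  "XX V C v = {x \<in> V. x \<noteq> v \<and> C (v, x) \<in> QQ V C v}"

lemma H1:
  assumes rf: "rf V C" and s: "src V C v" and v: "v \<in> V"
    and x: "x \<in> XX V C v" and y: "y \<in> XX V C v" and xy: "x \<noteq> y"
  shows "C (x, y) = C (y, v)"
proof -
  have X: "x \<in> V" "x \<noteq> v" "C (v, x) \<in> QQ V C v" "y \<in> V" "y \<noteq> v" using x y by (auto simp: XX_def)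
  have "(x, y) \<in> arcsV V" using X xy by (auto simp: arcsV_def)
  then have 1: "C (x, y) \<noteq> C (v, x)" using QQ_arc[OF X(3)] X xy by auto
  have "(y, v) \<in> arcsV V" using X v by (auto simp: arcsV_def)
  then have 2: "C (y, v) \<noteq> C (v, x)" using s X(3) unfolding src_def by metis
  show ?thesis using rfD[OF rf v X(1) X(4)] X xy 1 2 by metis
qed

lemma H1z:
  assumes rf: "rf V C" and s: "src V C v" and v: "v \<in> V"
    and x: "x \<in> XX V C v" and z: "z \<in> V" "z \<noteq> v" "z \<noteq> x"
  shows "C (x, z) = C (z, v)"
proof -
  have X: "x \<in> V" "x \<noteq> v" "C (v, x) \<in> QQ V C v" using x by (auto simp: XX_def)
  have "(x, z) \<in> arcsV V" using X z by (auto simp: arcsV_def)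
  then have 1: "C (x, z) \<noteq> C (v, x)" using QQ_arc[OF X(3)] X z by auto
  have "(z, v) \<in> arcsV V" using z v by (auto simp: arcsV_def)
  then have 2: "C (z, v) \<noteq> C (v, x)" using s X(3) unfolding src_def by metis
  show ?thesis using rfD[OF rf v X(1) z(1)] X z 1 2 by metis
qed

lemma QQ_sub_X:
  assumes s: "src V C v"
  shows "QQ V C v \<subseteq> (\<lambda>x. C (v, x)) ` XX V C v"
proof
  fix c assume c: "c \<in> QQ V C v"
  from QQ_obtain[OF c] show "c \<in> (\<lambda>x. C (v, x)) ` XX V C v"
  proof
    assume "\<exists>t. (t, v) \<in> arcsV V \<and> C (t, v) = c"
    then show ?thesis using s c unfolding src_def by blast
  next
    assume "\<exists>s. (v, s) \<in> arcsV V \<and> C (v, s) = c"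
    then obtain x where "(v, x) \<in> arcsV V" "C (v, x) = c" by blast
    then show ?thesis using c by (auto simp: XX_def arcsV_def)
  qed
qed

lemma finite_XX: "finite V \<Longrightarrow> finite (XX V C v)" by (simp add: XX_def)

lemma card_QQ_X: "finite V \<Longrightarrow> src V C v \<Longrightarrow> card (QQ V C v) \<le> card (XX V C v)"
  by (meson QQ_sub_X card_image_le card_mono finite_XX finite_imageI order_trans)

lemma lemmaB:
  assumes fin: "finite V" and rf: "rf V C" and s: "src V C v" and v: "v \<in> V"
    and y: "y \<in> XX V C v"
  shows "card (QQ V C y) \<le> 2 \<or> card (QQ V C y) + card (XX V C v) \<le> card V"
proof -
  have Y: "y \<in> V" "y \<noteq> v" using y by (auto simp: XX_def)
  have XV: "XX V C v \<subseteq> V" by (auto simp: XX_def)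
  have cardVX: "card (V - XX V C v) = card V - card (XX V C v)"
    using card_Diff_subset[OF finite_subset[OF XV fin] XV] .
  have cXV: "card (XX V C v) \<le> card V" using card_mono[OF fin XV] .
  show ?thesis
  proof (cases "(\<exists>s. (y, s) \<in> arcsV V \<and> C (y, s) \<in> QQ V C y) \<and> (\<exists>t. (t, y) \<in> arcsV V \<and> C (t, y) \<in> QQ V C y)")
    case True
    then show ?thesis using mixed[OF rf] by blast
  next
    case False
    have "QQ V C y \<subseteq> (\<lambda>t. C (y, t)) ` (V - XX V C v) \<or> QQ V C y \<subseteq> (\<lambda>t. C (t, y)) ` (V - XX V C v)"
    proof (cases "\<exists>t. (t, y) \<in> arcsV V \<and> C (t, y) \<in> QQ V C y")
      case False
      have "QQ V C y \<subseteq> (\<lambda>t. C (y, t)) ` (V - XX V C v)"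
      proof
        fix c assume c: "c \<in> QQ V C y"
        from QQ_obtain[OF c] False c obtain t where t: "(y, t) \<in> arcsV V" "C (y, t) = c" by blast
        have "t \<notin> XX V C v"
        proof
          assume tX: "t \<in> XX V C v"
          have "t \<noteq> y" using t by (auto simp: arcsV_def)
          then have "C (y, t) = C (t, v)" using H1[OF rf s v y tX] by simp
          moreover have "(t, v) \<in> arcsV V" using tX v by (auto simp: XX_def arcsV_def)
          ultimately show False using QQ_arc[OF c] t \<open>t \<noteq> y\<close> Y by metis
        qed
        then show "c \<in> (\<lambda>t. C (y, t)) ` (V - XX V C v)" using t by (auto simp: arcsV_def)
      qed
      then show ?thesis ..
    next
      case True
      then have nout: "\<not> (\<exists>s. (y, s) \<in> arcsV V \<and> C (y, s) \<in> QQ V C y)" using False by blast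
      have "QQ V C y \<subseteq> (\<lambda>t. C (t, y)) ` (V - XX V C v)"
      proof
        fix c assume c: "c \<in> QQ V C y"
        from QQ_obtain[OF c] nout c obtain t where t: "(t, y) \<in> arcsV V" "C (t, y) = c" by blast
        have "t \<notin> XX V C v"
        proof
          assume tX: "t \<in> XX V C v"
          have "t \<noteq> y" using t by (auto simp: arcsV_def)
          then have "C (t, y) = C (y, v)" using H1[OF rf s v tX y] by simp
          moreover have "(y, v) \<in> arcsV V" using Y v by (auto simp: arcsV_def)
          ultimately show False using nout c t by metis
        qed
        then show "c \<in> (\<lambda>t. C (t, y)) ` (V - XX V C v)" using t by (auto simp: arcsV_def)
      qed
      then show ?thesis ..
    qed
    then have "card (QQ V C y) \<le> card (V - XX V C v)"
      by (meson card_image_le card_mono fin finite_Diff finite_imageI order_trans)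
    then show ?thesis using cardVX cXV by auto
  qed
qed



lemma arith_step: "k\<^sup>2 div 4 + Suc k div 2 = (Suc k)\<^sup>2 div 4"
proof (cases "even k")
  case True
  then obtain m where k: "k = 2 * m" by blast
  have "(Suc k)\<^sup>2 = 1 + 4 * (m * m + m)" by (simp add: k power2_eq_square algebra_simps)
  then show ?thesis by (simp add: k power2_eq_square)
next
  case False
  then obtain m where k: "k = 2 * m + 1" using oddE by blast
  have a: "k\<^sup>2 = 1 + 4 * (m * m + m)" by (simp add: k power2_eq_square algebra_simps)
  have b: "(Suc k)\<^sup>2 = 4 * (m * m + 2 * m + 1)" by (simp add: k power2_eq_square algebra_simps)
  have a': "k\<^sup>2 div 4 = m * m + m" unfolding a by simp
  have b': "(Suc k)\<^sup>2 div 4 = m * m + 2 * m + 1" unfolding b by simp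
  have c': "Suc k div 2 = m + 1" using k by simp
  show ?thesis unfolding a' b' c' by simp
qed

lemma src_case:
  assumes fin: "finite V" and rf: "rf V C" and s: "src V C v" and v: "v \<in> V"
    and big: "card (QQ V C v) > card V div 2" and n: "4 \<le> card V"
  shows "\<exists>y\<in>V. card (QQ V C y) \<le> card V div 2"
proof -
  have "QQ V C v \<noteq> {}" using big by auto
  then have "XX V C v \<noteq> {}" using QQ_sub_X[OF s] by auto
  then obtain y where y: "y \<in> XX V C v" by blast
  have yV: "y \<in> V" using y by (auto simp: XX_def)
  have cq: "card (QQ V C v) \<le> card (XX V C v)" using card_QQ_X[OF fin s] .
  have d: "card V \<le> 2 * (card V div 2) + 1" by presburger
  from lemmaB[OF fin rf s v y] have "card (QQ V C y) \<le> 2 \<or> card (QQ V C y) + card (XX V C v) \<le> card V" .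
  then have "card (QQ V C y) \<le> card V div 2"
    using big cq n d by linarith
  then show ?thesis using yV by blast
qed

lemma exists_small:
  assumes fin: "finite V" and n: "4 \<le> card V" and rf: "rf V C"
  shows "\<exists>v\<in>V. card (QQ V C v) \<le> card V div 2"
proof (rule ccontr)
  assume "\<not> ?thesis"
  then have all: "\<forall>v\<in>V. card (QQ V C v) > card V div 2" by auto
  from n have "V \<noteq> {}" by auto
  then obtain v where v: "v \<in> V" by blast
  have big: "card (QQ V C v) > card V div 2" using all v by auto
  have three: "card (QQ V C v) > 2" using big n by linarith
  show False
  proof (cases "src V C v")
    case True
    then show False using src_case[OF fin rf True v big n] all by auto
  next
    case False
    then obtain t where t: "(t, v) \<in> arcsV V" "C (t, v) \<in> QQ V C v" unfolding src_def by blast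
    have nout: "\<not> (\<exists>s. (v, s) \<in> arcsV V \<and> C (v, s) \<in> QQ V C v)" using mixed[OF rf _ _ t] three by force
    have s': "src V (revC C) v" unfolding src_def QQ_revC using nout by (auto simp: arcsV_def)
    have big': "card (QQ V (revC C) v) > card V div 2" using big by (simp add: QQ_revC)
    show False using src_case[OF fin rf_revC[OF rf] s' v big' n] all by (auto simp: QQ_revC)
  qed
qed

lemma card3le2: "p = q \<or> q = r \<or> r = p \<Longrightarrow> card {p, q, r} \<le> (2::nat)"
  by (auto simp: card_insert_if)

lemma triple_colors:
  assumes "x \<noteq> y" "y \<noteq> z" "x \<noteq> z"
  shows "C ` arcsV {x, y, z} = {C (x, y), C (y, z), C (z, x)} \<union> {C (x, z), C (z, y), C (y, x)}"
  using assms by (auto simp: arcsV_def)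

lemma base3:
  assumes fin: "finite V" and c: "card V = 3" and rf: "rf V C"
  shows "card (C ` arcsV V) \<le> 4"
proof -
  obtain x y z where V: "V = {x, y, z}" "x \<noteq> y" "y \<noteq> z" "x \<noteq> z" using c card_3_iff by metis
  have 1: "card {C (x, y), C (y, z), C (z, x)} \<le> 2"
    by (rule card3le2) (use rfD[OF rf, of x y z] V in auto)
  have 2: "card {C (x, z), C (z, y), C (y, x)} \<le> 2"
    by (rule card3le2) (use rfD[OF rf, of x z y] V in auto)
  show ?thesis unfolding V(1) triple_colors[OF V(2-4)]
    using card_Un_le[of "{C (x, y), C (y, z), C (z, x)}" "{C (x, z), C (z, y), C (y, x)}"] 1 2 by linarith
qed

lemma weak_aux:
  "3 \<le> n \<Longrightarrow> finite V \<Longrightarrow> card V = n \<Longrightarrow> rf V C \<Longrightarrow> card (C ` arcsV V) \<le> n\<^sup>2 div 4 + 2"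
proof (induction n arbitrary: V rule: nat_induct_at_least)
  case base
  then show ?case using base3 by simp
next
  case (Suc k)
  obtain v where v: "v \<in> V" "card (QQ V C v) \<le> Suc k div 2" using exists_small[of V C] Suc by auto
  have "card (C ` arcsV (V - {v})) \<le> k\<^sup>2 div 4 + 2"
    using Suc.IH[of "V - {v}"] Suc.prems v rf_sub[of V C "V - {v}"] by auto
  then have "card (C ` arcsV V) \<le> k\<^sup>2 div 4 + 2 + Suc k div 2"
    using colors_split[OF Suc.prems(1), of C v] v by linarith
  then show ?case using arith_step[of k] by linarith
qed



lemma card_le4: "A \<subseteq> {a, b, c, d} \<Longrightarrow> card A \<le> 4"
proof -
  assume "A \<subseteq> {a, b, c, d}"
  then have "card A \<le> card {a, b, c, d}" by (intro card_mono) auto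
  also have "\<dots> \<le> 4" by (simp add: card_insert_if)
  finally show ?thesis .
qed

lemma eight:
  fixes w g h1 h2 h3 s1 s2 s3 :: nat
  assumes A: "h2 = h3 \<or> h3 = h1 \<or> h1 = h2"
    and B12: "s1 = h2 \<or> h2 = g \<or> g = s1" and B13: "s1 = h3 \<or> h3 = g \<or> g = s1"
    and B21: "s2 = h1 \<or> h1 = g \<or> g = s2" and B23: "s2 = h3 \<or> h3 = g \<or> g = s2"
    and B31: "s3 = h1 \<or> h1 = g \<or> g = s3" and B32: "s3 = h2 \<or> h2 = g \<or> g = s3"
    and C1: "s1 = h1 \<or> h1 = w \<or> w = s1" and C2: "s2 = h2 \<or> h2 = w \<or> w = s2"
    and C3: "s3 = h3 \<or> h3 = w \<or> w = s3"
  shows "card {w, g, h1, h2, h3, s1, s2, s3} \<le> 4"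
proof -
  let ?E = "{h1, h2, h3, g}"
  let ?S = "{w, g, h1, h2, h3, s1, s2, s3}"
  have allg: "card ?S \<le> 4" if "h1 = g" "h2 = g" "h3 = g"
  proof (cases "g = w")
    case True
    then have "?S \<subseteq> {g, s1, s2, s3}" using that by auto
    then show ?thesis by (rule card_le4)
  next
    case False
    then have "?S \<subseteq> {g, w, w, w}" using that C1 C2 C3 by auto
    then show ?thesis by (rule card_le4)
  qed
  show ?thesis
  proof (cases "s1 \<in> ?E \<and> s2 \<in> ?E \<and> s3 \<in> ?E")
    case True
    from A show ?thesis
    proof (elim disjE)
      assume "h2 = h3" then have "?S \<subseteq> {w, g, h1, h2}" using True by auto
      then show ?thesis by (rule card_le4)
    next
      assume "h3 = h1" then have "?S \<subseteq> {w, g, h1, h2}" using True by auto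
      then show ?thesis by (rule card_le4)
    next
      assume "h1 = h2" then have "?S \<subseteq> {w, g, h1, h3}" using True by auto
      then show ?thesis by (rule card_le4)
    qed
  next
    case False
    show ?thesis
    proof (cases "s1 \<in> ?E")
      case s1: False
      have "h2 = g" "h3 = g" using s1 B12 B13 by auto
      show ?thesis
      proof (cases "s2 \<in> ?E \<and> s3 \<in> ?E")
        case True
        then have "?S \<subseteq> {w, g, h1, s1}" using \<open>h2 = g\<close> \<open>h3 = g\<close> by auto
        then show ?thesis by (rule card_le4)
      next
        case False
        then have "h1 = g" using B21 B31 \<open>h2 = g\<close> \<open>h3 = g\<close> by auto
        then show ?thesis using allg \<open>h2 = g\<close> \<open>h3 = g\<close> by blast
      qed
    next
      case s1: True
      show ?thesis
      proof (cases "s2 \<in> ?E")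
        case s2: False
        have "h1 = g" "h3 = g" using s2 B21 B23 by auto
        show ?thesis
        proof (cases "s3 \<in> ?E")
          case True
          then have "?S \<subseteq> {w, g, h2, s2}" using s1 \<open>h1 = g\<close> \<open>h3 = g\<close> by auto
          then show ?thesis by (rule card_le4)
        next
          case False
          then have "h2 = g" using B32 by auto
          then show ?thesis using allg \<open>h1 = g\<close> \<open>h3 = g\<close> by blast
        qed
      next
        case s2: True
        then have s3: "s3 \<notin> ?E" using False s1 by blast
        have "h1 = g" "h2 = g" using s3 B31 B32 by auto
        then have "?S \<subseteq> {w, g, h3, s3}" using s1 s2 by auto
        then show ?thesis by (rule card_le4)
      qed
    qed
  qed
qed

lemma le2_image:
  assumes fin: "finite S" and h: "\<And>a b c. a \<in> S \<Longrightarrow> b \<in> S \<Longrightarrow> c \<in> S \<Longrightarrow> a \<noteq> b \<Longrightarrow> b \<noteq> c \<Longrightarrow> a \<noteq> c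
     \<Longrightarrow> f a = f b \<or> f b = f c \<or> f c = f a"
  shows "card (f ` S) \<le> 2"
proof (rule ccontr)
  assume "\<not> ?thesis"
  then have "3 \<le> card (f ` S)" by simp
  then obtain T where T: "T \<subseteq> f ` S" "card T = 3" using obtain_subset_with_card_n by metis
  then obtain p q r where "T = {p, q, r}" "p \<noteq> q" "q \<noteq> r" "p \<noteq> r" using card_3_iff by metis
  with T obtain a b c where "a \<in> S" "b \<in> S" "c \<in> S" "f a = p" "f b = q" "f c = r" by (metis image_iff insert_subset)
  then show False using h[of a b c] \<open>p \<noteq> q\<close> \<open>q \<noteq> r\<close> \<open>p \<noteq> r\<close> by auto
qed

lemma src_full:
  assumes fin: "finite V" and rf: "rf V C" and s: "src V C v" and v: "v \<in> V"
    and full: "V - {v} \<subseteq> XX V C v"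
  shows "card (C ` arcsV V) \<le> card V + 1"
proof -
  let ?h = "\<lambda>x. C (x, v)"
  have sub: "C ` arcsV V \<subseteq> (\<lambda>x. C (v, x)) ` (V - {v}) \<union> ?h ` (V - {v})"
  proof
    fix c assume "c \<in> C ` arcsV V"
    then obtain x y where xy: "(x, y) \<in> arcsV V" "c = C (x, y)" by auto
    show "c \<in> (\<lambda>x. C (v, x)) ` (V - {v}) \<union> ?h ` (V - {v})"
    proof (cases "x = v \<or> y = v")
      case True
      then show ?thesis using xy by (auto simp: arcsV_def)
    next
      case False
      then have "C (x, y) = C (y, v)" using H1[OF rf s v, of x y] full xy by (auto simp: arcsV_def)
      then show ?thesis using xy False by (auto simp: arcsV_def)
    qed
  qed
  have h2: "card (?h ` (V - {v})) \<le> 2"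
  proof (rule le2_image)
    fix a b c assume abc: "a \<in> V - {v}" "b \<in> V - {v}" "c \<in> V - {v}" "a \<noteq> b" "b \<noteq> c" "a \<noteq> c"
    have X: "a \<in> XX V C v" "b \<in> XX V C v" "c \<in> XX V C v" using abc full by auto
    have "C (a, b) = C (b, c) \<or> C (b, c) = C (c, a) \<or> C (c, a) = C (a, b)"
      using rfD[OF rf, of a b c] abc by auto
    moreover have "C (a, b) = ?h b" "C (b, c) = ?h c" "C (c, a) = ?h a"
      using H1[OF rf s v] X abc by auto
    ultimately show "?h a = ?h b \<or> ?h b = ?h c \<or> ?h c = ?h a" by auto
  qed (use fin in auto)
  have 1: "card (C ` arcsV V) \<le> card ((\<lambda>x. C (v, x)) ` (V - {v}) \<union> ?h ` (V - {v}))"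
    using sub by (intro card_mono) (auto simp: fin)
  have 2: "card ((\<lambda>x. C (v, x)) ` (V - {v}) \<union> ?h ` (V - {v})) \<le> card ((\<lambda>x. C (v, x)) ` (V - {v})) + card (?h ` (V - {v}))" by (rule card_Un_le)
  have 3: "card ((\<lambda>x. C (v, x)) ` (V - {v})) \<le> card (V - {v})" by (rule card_image_le) (simp add: fin)
  have 4: "card (V - {v}) = card V - 1" using v by (simp add: card_Diff_singleton)
  have 5: "card V > 0" using fin v card_gt_0_iff by blast
  show ?thesis using 1 2 3 4 5 h2 by linarith
qed



lemma src_five3:
  assumes fin: "finite V" and c5: "card V = 5" and rf: "rf V C" and s: "src V C v" and v: "v \<in> V"
    and c3: "card (XX V C v) = 3"
  shows "card (C ` arcsV V) \<le> 7"
proof -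
  obtain x1 x2 x3 where X: "XX V C v = {x1, x2, x3}" "x1 \<noteq> x2" "x2 \<noteq> x3" "x1 \<noteq> x3"
    using c3 card_3_iff by metis
  have XV: "XX V C v \<subseteq> V - {v}" by (auto simp: XX_def)
  have "card (V - {v} - XX V C v) = card (V - {v}) - card (XX V C v)"
    by (rule card_Diff_subset) (use XV fin in \<open>auto intro: finite_subset\<close>)
  also have "card (V - {v}) = 4" using v c5 by (simp add: card_Diff_singleton)
  finally have "card (V - {v} - XX V C v) = 1" using c3 by simp
  then obtain z where Z: "V - {v} - XX V C v = {z}" using card_1_singletonE by blast
  have Vd: "V = {v, x1, x2, x3, z}" using Z X XV v by auto
  have xin: "x1 \<in> XX V C v" "x2 \<in> XX V C v" "x3 \<in> XX V C v" using X by auto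
  have zz: "z \<in> V" "z \<noteq> v" "z \<noteq> x1" "z \<noteq> x2" "z \<noteq> x3" using Z X by auto
  have xv: "x1 \<noteq> v" "x2 \<noteq> v" "x3 \<noteq> v" "x1 \<in> V" "x2 \<in> V" "x3 \<in> V" using xin by (auto simp: XX_def)
  have e: "C (x1, x2) = C (x2, v)" "C (x2, x1) = C (x1, v)" "C (x1, x3) = C (x3, v)"
    "C (x3, x1) = C (x1, v)" "C (x2, x3) = C (x3, v)" "C (x3, x2) = C (x2, v)"
    using H1[OF rf s v] xin X by auto
  have ez: "C (x1, z) = C (z, v)" "C (x2, z) = C (z, v)" "C (x3, z) = C (z, v)"
    using H1z[OF rf s v] xin zz by auto
  let ?S = "{C (v, z), C (z, v), C (x1, v), C (x2, v), C (x3, v), C (z, x1), C (z, x2), C (z, x3)}"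
  have sub: "C ` arcsV V \<subseteq> {C (v, x1), C (v, x2), C (v, x3)} \<union> ?S"
  proof
    fix c assume "c \<in> C ` arcsV V"
    then obtain p q where pq: "p \<in> V" "q \<in> V" "p \<noteq> q" "c = C (p, q)" by (auto simp: arcsV_def)
    show "c \<in> {C (v, x1), C (v, x2), C (v, x3)} \<union> ?S"
      using pq unfolding Vd using e ez by auto
  qed
  have t: "\<And>a b d. a \<in> V \<Longrightarrow> b \<in> V \<Longrightarrow> d \<in> V \<Longrightarrow> a \<noteq> b \<Longrightarrow> b \<noteq> d \<Longrightarrow> d \<noteq> a \<Longrightarrow>
     C (a, b) = C (b, d) \<or> C (b, d) = C (d, a) \<or> C (d, a) = C (a, b)"
    using rfD[OF rf] by blast
  have "card ?S \<le> 4"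
  proof (rule eight)
    show "C (x2, v) = C (x3, v) \<or> C (x3, v) = C (x1, v) \<or> C (x1, v) = C (x2, v)"
      using t[of x1 x2 x3] xv X e by metis
    show "C (z, x1) = C (x2, v) \<or> C (x2, v) = C (z, v) \<or> C (z, v) = C (z, x1)"
      using t[of z x1 x2] xv X e ez zz by metis
    show "C (z, x1) = C (x3, v) \<or> C (x3, v) = C (z, v) \<or> C (z, v) = C (z, x1)"
      using t[of z x1 x3] xv X e ez zz by metis
    show "C (z, x2) = C (x1, v) \<or> C (x1, v) = C (z, v) \<or> C (z, v) = C (z, x2)"
      using t[of z x2 x1] xv X e ez zz by metis
    show "C (z, x2) = C (x3, v) \<or> C (x3, v) = C (z, v) \<or> C (z, v) = C (z, x2)"
      using t[of z x2 x3] xv X e ez zz by metis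
    show "C (z, x3) = C (x1, v) \<or> C (x1, v) = C (z, v) \<or> C (z, v) = C (z, x3)"
      using t[of z x3 x1] xv X e ez zz by metis
    show "C (z, x3) = C (x2, v) \<or> C (x2, v) = C (z, v) \<or> C (z, v) = C (z, x3)"
      using t[of z x3 x2] xv X e ez zz by metis
    show "C (z, x1) = C (x1, v) \<or> C (x1, v) = C (v, z) \<or> C (v, z) = C (z, x1)"
      using t[of z x1 v] xv zz v by metis
    show "C (z, x2) = C (x2, v) \<or> C (x2, v) = C (v, z) \<or> C (v, z) = C (z, x2)"
      using t[of z x2 v] xv zz v by metis
    show "C (z, x3) = C (x3, v) \<or> C (x3, v) = C (v, z) \<or> C (v, z) = C (z, x3)"
      using t[of z x3 v] xv zz v by metis
  qed
  have 1: "card (C ` arcsV V) \<le> card ({C (v, x1), C (v, x2), C (v, x3)} \<union> ?S)"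
    using sub by (intro card_mono) auto
  have 2: "card ({C (v, x1), C (v, x2), C (v, x3)} \<union> ?S) \<le> card {C (v, x1), C (v, x2), C (v, x3)} + card ?S"
    by (rule card_Un_le)
  have 3: "card {C (v, x1), C (v, x2), C (v, x3)} \<le> 3" by (simp add: card_insert_if)
  show ?thesis using 1 2 3 \<open>card ?S \<le> 4\<close> by linarith
qed



lemma src_G:
  assumes fin: "finite V" and rf: "rf V C" and s: "src V C v" and v: "v \<in> V"
    and q3: "3 \<le> card (QQ V C v)" and n: "card V = 4 \<or> card V = 5"
  shows "card (C ` arcsV V) \<le> 2 * card V - 3"
proof -
  have cX: "3 \<le> card (XX V C v)" using card_QQ_X[OF fin s] q3 by linarith
  have XV: "XX V C v \<subseteq> V - {v}" by (auto simp: XX_def)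
  have cV: "card (V - {v}) = card V - 1" using v by (simp add: card_Diff_singleton)
  have le: "card (XX V C v) \<le> card (V - {v})" using card_mono[OF _ XV] fin by auto
  show ?thesis
  proof (cases "card (XX V C v) = card (V - {v})")
    case True
    then have "XX V C v = V - {v}" using card_subset_eq[OF _ XV] fin by auto
    then have "card (C ` arcsV V) \<le> card V + 1" using src_full[OF fin rf s v] by auto
    then show ?thesis using n by auto
  next
    case False
    then have "card V = 5" "card (XX V C v) = 3" using n cX le cV by auto
    then show ?thesis using src_five3[OF fin _ rf s v] by auto
  qed
qed

lemma G_all:
  assumes fin: "finite V" and rf: "rf V C" and v: "v \<in> V"
    and q3: "3 \<le> card (QQ V C v)" and n: "card V = 4 \<or> card V = 5"
  shows "card (C ` arcsV V) \<le> 2 * card V - 3"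
proof (cases "src V C v")
  case True
  then show ?thesis using src_G[OF fin rf _ v q3 n] by blast
next
  case False
  then obtain t where t: "(t, v) \<in> arcsV V" "C (t, v) \<in> QQ V C v" unfolding src_def by blast
  have nout: "\<not> (\<exists>s. (v, s) \<in> arcsV V \<and> C (v, s) \<in> QQ V C v)" using mixed[OF rf _ _ t] q3 by force
  have s': "src V (revC C) v" unfolding src_def QQ_revC using nout by (auto simp: arcsV_def)
  have q3': "3 \<le> card (QQ V (revC C) v)" using q3 by (simp add: QQ_revC)
  show ?thesis using src_G[OF fin rf_revC[OF rf] s' v q3' n] by (simp add: image_revC)
qed

lemma all_q2:
  assumes fin: "finite V" and rf: "rf V C" and n: "card V = 4 \<or> card V = 5"
    and many: "2 * card V - 2 \<le> card (C ` arcsV V)"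
  shows "\<forall>v\<in>V. card (QQ V C v) \<le> 2"
proof
  fix v assume v: "v \<in> V"
  show "card (QQ V C v) \<le> 2"
  proof (rule ccontr)
    assume "\<not> ?thesis"
    then have "3 \<le> card (QQ V C v)" by simp
    from G_all[OF fin rf v this n] many n show False by auto
  qed
qed

lemma triples_four:
  assumes fin: "finite V" and c5: "card V = 5" and rf: "rf V C" and many: "8 \<le> card (C ` arcsV V)"
    and W: "W \<subseteq> V" "card W = 3"
  shows "4 \<le> card (C ` arcsV W)"
proof -
  have "card (V - W) = 2" using card_Diff_subset[OF finite_subset[OF W(1) fin] W(1)] c5 W by simp
  then obtain u w where uw: "V - W = {u, w}" "u \<noteq> w" using card_2_iff by metis
  have u: "u \<in> V" "u \<notin> W" and w: "w \<in> V" "w \<notin> W" using uw by auto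
  let ?V' = "V - {u}"
  have q: "card (QQ V C u) \<le> 2" using all_q2[OF fin rf _ ] c5 many u by auto
  have c': "6 \<le> card (C ` arcsV ?V')" using colors_split[OF fin, of C u] q many by linarith
  have c4: "card ?V' = 4" using u c5 by (simp add: card_Diff_singleton)
  have rf': "rf ?V' C" using rf_sub[OF rf] by blast
  have q': "card (QQ ?V' C w) \<le> 2" using all_q2[OF _ rf'] c4 c' w uw fin by auto
  have "4 \<le> card (C ` arcsV (?V' - {w}))" using colors_split[of ?V' C w] fin q' c' by auto
  moreover have "?V' - {w} = W" using uw W by auto
  ultimately show ?thesis by simp
qed

lemma outdist:
  assumes fin: "finite V" and c5: "card V = 5" and rf: "rf V C" and many: "8 \<le> card (C ` arcsV V)"
    and xyz: "x \<in> V" "y \<in> V" "z \<in> V" "x \<noteq> y" "y \<noteq> z" "x \<noteq> z"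
  shows "C (x, y) \<noteq> C (x, z)"
proof -
  let ?A = "{C (x, y), C (y, z), C (z, x)}" and ?B = "{C (x, z), C (z, y), C (y, x)}"
  have W: "{x, y, z} \<subseteq> V" "card {x, y, z} = 3" using xyz by auto
  have 4: "4 \<le> card (?A \<union> ?B)" using triples_four[OF fin c5 rf many W] triple_colors[OF xyz(4-6), of C] by simp
  have 1: "card ?A \<le> 2" by (rule card3le2) (use rfD[OF rf, of x y z] xyz in auto)
  have 2: "card ?B \<le> 2" by (rule card3le2) (use rfD[OF rf, of x z y] xyz in auto)
  have "card ?A + card ?B = card (?A \<union> ?B) + card (?A \<inter> ?B)" by (rule card_Un_Int) auto
  then have "card (?A \<inter> ?B) = 0" using 1 2 4 by linarith
  then have "?A \<inter> ?B = {}" by simp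
  then show ?thesis by auto
qed



lemma counting:
  assumes fin: "finite V" and n: "5 \<le> card V" and rf: "rf V C"
    and od: "\<And>x y z. x \<in> V \<Longrightarrow> y \<in> V \<Longrightarrow> z \<in> V \<Longrightarrow> x \<noteq> y \<Longrightarrow> y \<noteq> z \<Longrightarrow> x \<noteq> z \<Longrightarrow> C (x, y) \<noteq> C (x, z)"
  shows "3 * card (C ` arcsV V) \<le> card (arcsV V)"
proof -
  let ?A = "arcsV V"
  define T where "T = Sigma ?A (\<lambda>p. V - {fst p, snd p})"
  define M where "M = {t \<in> T. C (fst t) = C (snd (fst t), snd t)}"
  have finA: "finite ?A" using finite_arcsV[OF fin] .
  have finT: "finite T" unfolding T_def using finA fin by auto
  have finM: "finite M" unfolding M_def using finT by auto
  have cd: "card (V - {a, b}) = card V - 2" if "(a, b) \<in> ?A" for a b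
  proof -
    have "{a, b} \<subseteq> V" "card {a, b} = 2" using that by (auto simp: arcsV_def)
    then show ?thesis using card_Diff_subset[of "{a,b}" V] by auto
  qed
  have cT: "card T = card ?A * (card V - 2)"
  proof -
    have "card T = (\<Sum>p\<in>?A. card (V - {fst p, snd p}))" unfolding T_def using finA fin by simp
    also have "\<dots> = (\<Sum>p\<in>?A. card V - 2)" by (rule sum.cong) (auto simp: cd)
    finally show ?thesis by simp
  qed
  define r1 where "r1 = (\<lambda>t :: (nat \<times> nat) \<times> nat. ((snd t, fst (fst t)), snd (fst t)))"
  define r2 where "r2 = (\<lambda>t :: (nat \<times> nat) \<times> nat. ((snd (fst t), snd t), fst (fst t)))"
  have TM: "T \<subseteq> M \<union> r1 ` M \<union> r2 ` M"
  proof
    fix t assume t: "t \<in> T"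
    obtain x y z where txyz: "t = ((x, y), z)" by (metis prod.collapse)
    have V: "x \<in> V" "y \<in> V" "z \<in> V" "x \<noteq> y" "z \<noteq> x" "z \<noteq> y" using t txyz by (auto simp: T_def arcsV_def)
    have "C (x, y) = C (y, z) \<or> C (y, z) = C (z, x) \<or> C (z, x) = C (x, y)"
      using rfD[OF rf V(1-3)] V by auto
    then show "t \<in> M \<union> r1 ` M \<union> r2 ` M"
    proof (elim disjE)
      assume "C (x, y) = C (y, z)"
      then show ?thesis using t txyz by (auto simp: M_def)
    next
      assume e: "C (y, z) = C (z, x)"
      have "((y, z), x) \<in> M" using e V by (auto simp: M_def T_def arcsV_def)
      moreover have "t = r1 ((y, z), x)" by (simp add: r1_def txyz)
      ultimately show ?thesis by blast
    next
      assume e: "C (z, x) = C (x, y)"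
      have "((z, x), y) \<in> M" using e V by (auto simp: M_def T_def arcsV_def)
      moreover have "t = r2 ((z, x), y)" by (simp add: r2_def txyz)
      ultimately show ?thesis by blast
    qed
  qed
  have "card T \<le> card (M \<union> r1 ` M \<union> r2 ` M)" using TM finM by (intro card_mono) auto
  also have "\<dots> \<le> card M + card (r1 ` M) + card (r2 ` M)"
    using card_Un_le[of "M \<union> r1 ` M" "r2 ` M"] card_Un_le[of M "r1 ` M"] by linarith
  also have "\<dots> \<le> 3 * card M" using card_image_le[OF finM, of r1] card_image_le[OF finM, of r2] by linarith
  finally have T3: "card T \<le> 3 * card M" .
  have inj: "inj_on fst M"
  proof (rule inj_onI)
    fix s t assume st: "s \<in> M" "t \<in> M" "fst s = fst t"
    obtain x y z where s: "s = ((x, y), z)" by (metis prod.collapse)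
    obtain z' where t: "t = ((x, y), z')" using st s by (metis prod.collapse fst_conv)
    have h: "x \<in> V" "y \<in> V" "z \<in> V" "z' \<in> V" "z \<noteq> y" "z' \<noteq> y" "C (x, y) = C (y, z)" "C (x, y) = C (y, z')"
      using st s t by (auto simp: M_def T_def arcsV_def)
    have "z = z'"
    proof (rule ccontr)
      assume "z \<noteq> z'"
      then have "C (y, z) \<noteq> C (y, z')" using od[of y z z'] h by auto
      then show False using h by simp
    qed
    then show "s = t" using s t by simp
  qed
  have fM: "fst ` M \<subseteq> ?A" by (auto simp: M_def T_def)
  have "card ?A * 3 \<le> card ?A * (card V - 2)" using n by (intro mult_le_mono2) linarith
  then have "card ?A \<le> card M" using T3 cT by linarith
  then have "card ?A \<le> card (fst ` M)" using card_image[OF inj] by simp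
  then have fMA: "fst ` M = ?A" using card_seteq[OF finA fM] by simp
  have succ: "\<exists>z. z \<in> V \<and> z \<noteq> x \<and> z \<noteq> y \<and> C (y, z) = C (x, y)" if "(x, y) \<in> ?A" for x y
  proof -
    from that fMA obtain t where "t \<in> M" "fst t = (x, y)" by force
    then show ?thesis by (auto simp: M_def T_def)
  qed
  have cls: "3 \<le> card {e \<in> ?A. C e = c}" if c: "c \<in> C ` ?A" for c
  proof -
    obtain x y where xy: "(x, y) \<in> ?A" "C (x, y) = c" using c by auto
    obtain z where z: "z \<in> V" "z \<noteq> x" "z \<noteq> y" "C (y, z) = C (x, y)" using succ[OF xy(1)] by blast
    have yz: "(y, z) \<in> ?A" using z xy by (auto simp: arcsV_def)
    obtain w where w: "w \<in> V" "w \<noteq> y" "w \<noteq> z" "C (z, w) = C (y, z)" using succ[OF yz] by blast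
    have zw: "(z, w) \<in> ?A" using w z by (auto simp: arcsV_def)
    have xyne: "x \<noteq> y" using xy by (auto simp: arcsV_def)
    have "{(x, y), (y, z), (z, w)} \<subseteq> {e \<in> ?A. C e = c}" using xy yz zw z w by auto
    moreover have "card {(x, y), (y, z), (z, w)} = 3" using z w xyne by (simp add: card_insert_if)
    moreover have "card {(x, y), (y, z), (z, w)} \<le> card {e \<in> ?A. C e = c}"
      using calculation(1) finA by (intro card_mono) auto
    ultimately show ?thesis by simp
  qed
  have "(\<Sum>c\<in>C ` ?A. card {e \<in> ?A. C e = c}) = (\<Sum>e\<in>?A. 1)"
  proof (rule sum_multicount_gen)
    show "\<forall>e\<in>?A. card {c \<in> C ` ?A. C e = c} = 1"
    proof
      fix e assume "e \<in> ?A"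
      then have "{c \<in> C ` ?A. C e = c} = {C e}" by auto
      then show "card {c \<in> C ` ?A. C e = c} = 1" by simp
    qed
  qed (use finA in auto)
  then have "card ?A = (\<Sum>c\<in>C ` ?A. card {e \<in> ?A. C e = c})" by simp
  also have "\<dots> \<ge> (\<Sum>c\<in>C ` ?A. 3)" by (rule sum_mono) (use cls in auto)
  finally show ?thesis by simp
qed



lemma five:
  assumes fin: "finite V" and c5: "card V = 5" and rf: "rf V C"
  shows "card (C ` arcsV V) \<le> 7"
proof (rule ccontr)
  assume "\<not> ?thesis"
  then have many: "8 \<le> card (C ` arcsV V)" by simp
  have "3 * card (C ` arcsV V) \<le> card (arcsV V)"
    by (rule counting[OF fin _ rf]) (use c5 outdist[OF fin c5 rf many] in auto)
  moreover have "card (arcsV V) = 20" using card_arcsV[OF fin] c5 by simp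
  ultimately show False using many by linarith
qed

lemma strong_aux:
  "5 \<le> n \<Longrightarrow> finite V \<Longrightarrow> card V = n \<Longrightarrow> rf V C \<Longrightarrow> card (C ` arcsV V) \<le> n\<^sup>2 div 4 + 1"
proof (induction n arbitrary: V rule: nat_induct_at_least)
  case base
  then show ?case using five by simp
next
  case (Suc k)
  obtain v where v: "v \<in> V" "card (QQ V C v) \<le> Suc k div 2" using exists_small[of V C] Suc by auto
  have "card (C ` arcsV (V - {v})) \<le> k\<^sup>2 div 4 + 1"
    using Suc.IH[of "V - {v}"] Suc.prems v rf_sub[of V C "V - {v}"] by auto
  then have "card (C ` arcsV V) \<le> k\<^sup>2 div 4 + 1 + Suc k div 2"
    using colors_split[OF Suc.prems(1), of C v] v by linarith
  then show ?case using arith_step[of k] by linarith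
qed

lemma arcs_eq: "arcs n = arcsV {0..<n}"
  by (auto simp: arcs_def arcsV_def)

lemma rf_iff: "\<not> has_rainbow_triangle n C \<longleftrightarrow> rf {0..<n} C"
  unfolding has_rainbow_triangle_def rf_def Ball_def atLeastLessThan_iff by (intro iffI allI impI; blast)

lemma upper:
  assumes "3 \<le> n" "\<not> has_rainbow_triangle n C"
  shows "num_colors n C \<le> (if n = 3 \<or> n = 4 then n\<^sup>2 div 4 + 2 else n\<^sup>2 div 4 + 1)"
proof -
  have rf: "rf {0..<n} C" using assms rf_iff by blast
  show ?thesis
  proof (cases "n = 3 \<or> n = 4")
    case True
    then show ?thesis using weak_aux[OF assms(1), of "{0..<n}" C] rf by (simp add: num_colors_def arcs_eq)
  next
    case False
    then have "5 \<le> n" using assms by auto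
    then show ?thesis using strong_aux[of n "{0..<n}" C] rf False by (simp add: num_colors_def arcs_eq)
  qed
qed



definition Cb :: "nat \<Rightarrow> nat \<times> nat \<Rightarrow> nat" where
  "Cb n p = (if fst p < n div 2 \<and> n div 2 \<le> snd p then fst p * n + snd p + 1 else 0)"

lemma Cb_rf: "\<not> has_rainbow_triangle n (Cb n)"
proof
  assume "has_rainbow_triangle n (Cb n)"
  then obtain x y z where d: "Cb n (x, y) \<noteq> Cb n (y, z)" "Cb n (y, z) \<noteq> Cb n (z, x)" "Cb n (z, x) \<noteq> Cb n (x, y)"
    unfolding has_rainbow_triangle_def by blast
  let ?k = "n div 2"
  have z: "\<And>a b. \<not> (a < ?k \<and> ?k \<le> b) \<Longrightarrow> Cb n (a, b) = 0" by (simp add: Cb_def)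
  show False
  proof (cases "x < ?k \<and> ?k \<le> y")
    case True
    then have "Cb n (y, z) = 0" "Cb n (z, x) = 0" using z by auto
    then show False using d by simp
  next
    case False
    then have 1: "Cb n (x, y) = 0" using z by auto
    show False
    proof (cases "y < ?k \<and> ?k \<le> z")
      case True
      then have "Cb n (z, x) = 0" using z by auto
      then show False using d 1 by simp
    next
      case False
      then have "Cb n (y, z) = 0" using z by auto
      then show False using d 1 by simp
    qed
  qed
qed

lemma half_prod: "((n::nat) div 2) * (n - n div 2) = n\<^sup>2 div 4"
proof (cases "even n")
  case True
  then obtain m where n: "n = 2 * m" by blast
  show ?thesis by (simp add: n power2_eq_square)
next
  case False
  then obtain m where n: "n = 2 * m + 1" using oddE by blast
  have a: "n\<^sup>2 = 1 + 4 * (m * m + m)" by (simp add: n power2_eq_square algebra_simps)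
  have "n\<^sup>2 div 4 = m * m + m" unfolding a by simp
  moreover have "n div 2 = m" using n by simp
  ultimately show ?thesis using n by (simp add: algebra_simps)
qed

lemma Cb_card:
  assumes "2 \<le> n"
  shows "n\<^sup>2 div 4 + 1 \<le> num_colors n (Cb n)"
proof -
  let ?k = "n div 2"
  let ?f = "\<lambda>p :: nat \<times> nat. fst p * n + snd p + 1"
  let ?S = "{..<?k} \<times> {?k..<n}"
  have inj: "inj_on ?f ?S"
  proof (rule inj_onI)
    fix p q assume pq: "p \<in> ?S" "q \<in> ?S" "?f p = ?f q"
    obtain a b where p: "p = (a, b)" by (metis prod.collapse)
    obtain c d where q: "q = (c, d)" by (metis prod.collapse)
    have bd: "b < n" "d < n" using pq p q by auto
    have e: "a * n + b = c * n + d" using pq p q by simp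
    have "(a * n + b) mod n = b" "(c * n + d) mod n = d" using bd by auto
    then have "b = d" using e by metis
    then have "a * n = c * n" using e by simp
    then have "a = c" using assms by simp
    then show "p = q" using p q \<open>b = d\<close> by simp
  qed
  have cS: "card ?S = n\<^sup>2 div 4" using half_prod[of n] by simp
  have sub: "insert 0 (?f ` ?S) \<subseteq> Cb n ` arcs n"
  proof
    fix c assume "c \<in> insert 0 (?f ` ?S)"
    then show "c \<in> Cb n ` arcs n"
    proof
      assume "c = 0"
      moreover have "(1, 0) \<in> arcs n" using assms by (auto simp: arcs_def)
      moreover have "Cb n (1, 0) = 0" by (simp add: Cb_def)
      ultimately show ?thesis by (metis image_eqI)
    next
      assume "c \<in> ?f ` ?S"
      then obtain a b where ab: "a < ?k" "?k \<le> b" "b < n" "c = a * n + b + 1" by auto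
      then have "(a, b) \<in> arcs n" "Cb n (a, b) = c" by (auto simp: arcs_def Cb_def)
      then show ?thesis by (metis image_eqI)
    qed
  qed
  have "card (insert 0 (?f ` ?S)) = card (?f ` ?S) + 1" by (subst card_insert_disjoint) auto
  also have "card (?f ` ?S) = n\<^sup>2 div 4" using card_image[OF inj] cS by simp
  finally have "card (insert 0 (?f ` ?S)) = n\<^sup>2 div 4 + 1" .
  moreover have "card (insert 0 (?f ` ?S)) \<le> num_colors n (Cb n)"
    unfolding num_colors_def
    by (rule card_mono[OF _ sub]) (auto simp: arcs_eq intro: finite_arcsV)
  ultimately show ?thesis by simp
qed



definition C3 :: "nat \<times> nat \<Rightarrow> nat" where
  "C3 p = (if p = (0,1) \<or> p = (1,2) then 1 else if p = (2,0) then 2 else if p = (0,2) \<or> p = (2,1) then 3 else 4)"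

definition C4 :: "nat \<times> nat \<Rightarrow> nat" where
  "C4 p = (if p = (0,1) \<or> p = (1,3) \<or> p = (2,0) \<or> p = (3,2) then 0
     else if p = (0,2) \<or> p = (1,0) \<or> p = (2,3) \<or> p = (3,1) then 1
     else if p = (0,3) then 2 else if p = (1,2) then 3 else if p = (2,1) then 4 else 5)"

lemma set3: "{0..<3::nat} = {0,1,2}" by auto
lemma set4: "{0..<4::nat} = {0,1,2,3}" by auto

lemma arcs3: "arcsV {0,1,2::nat} = {(0,1),(0,2),(1,0),(1,2),(2,0),(2,1)}"
  by (auto simp: arcsV_def)
lemma arcs4: "arcsV {0,1,2,3::nat} = {(0,1),(0,2),(0,3),(1,0),(1,2),(1,3),(2,0),(2,1),(2,3),(3,0),(3,1),(3,2)}"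
  by (auto simp: arcsV_def)

lemma C3_ok: "\<not> has_rainbow_triangle 3 C3" "num_colors 3 C3 = 4"
proof -
  have "rf {0,1,2} C3" unfolding rf_def by (simp add: C3_def)
  then show "\<not> has_rainbow_triangle 3 C3" using rf_iff set3 by metis
  show "num_colors 3 C3 = 4" unfolding num_colors_def arcs_eq set3 arcs3 by (simp add: C3_def)
qed

lemma C4_ok: "\<not> has_rainbow_triangle 4 C4" "num_colors 4 C4 = 6"
proof -
  have "rf {0,1,2,3} C4" unfolding rf_def by (simp add: C4_def)
  then show "\<not> has_rainbow_triangle 4 C4" using rf_iff set4 by metis
  show "num_colors 4 C4 = 6" unfolding num_colors_def arcs_eq set4 arcs4 by (simp add: C4_def)
qed



lemma lower:
  assumes "3 \<le> n"
  shows "\<exists>C. \<not> has_rainbow_triangle n C \<and> (if n = 3 \<or> n = 4 then n\<^sup>2 div 4 + 2 else n\<^sup>2 div 4 + 1) \<le> num_colors n C"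
proof (cases "n = 3 \<or> n = 4")
  case True
  have n34: "n = 3 \<or> n = 4" using True .
  have iv: "(if n = 3 \<or> n = 4 then n\<^sup>2 div 4 + 2 else n\<^sup>2 div 4 + 1) = n\<^sup>2 div 4 + 2"
    using True by (rule if_P)
  from n34 show ?thesis
  proof
    assume n: "n = 3"
    have e: "n\<^sup>2 div 4 + 2 = (4::nat)" unfolding n by (simp add: power2_eq_square)
    have h: "\<not> has_rainbow_triangle n C3" unfolding n by (rule C3_ok(1))
    have c: "num_colors n C3 = 4" unfolding n by (rule C3_ok(2))
    show ?thesis unfolding iv unfolding e using h c by (intro exI[of _ C3]) (simp only: order_refl simp_thms)
  next
    assume n: "n = 4"
    have e: "n\<^sup>2 div 4 + 2 = (6::nat)" unfolding n by (simp add: power2_eq_square)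
    have h: "\<not> has_rainbow_triangle n C4" unfolding n by (rule C4_ok(1))
    have c: "num_colors n C4 = 6" unfolding n by (rule C4_ok(2))
    show ?thesis unfolding iv unfolding e using h c by (intro exI[of _ C4]) (simp only: order_refl simp_thms)
  qed
next
  case False
  have cbfacts: "\<not> has_rainbow_triangle n (Cb n) \<and> n\<^sup>2 div 4 + 1 \<le> num_colors n (Cb n)"
    using Cb_rf[of n] Cb_card[of n] assms by simp
  have "\<not> has_rainbow_triangle n (Cb n) \<and> (if n = 3 \<or> n = 4 then n\<^sup>2 div 4 + 2 else n\<^sup>2 div 4 + 1) \<le> num_colors n (Cb n)"
    unfolding if_not_P[OF False] by (rule cbfacts)
  then show ?thesis by blast
qed

theorem theorem1:
  fixes n :: nat
  assumes "n \<ge> 3"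
  shows "f_rainbow n = (if n = 3 \<or> n = 4 then n\<^sup>2 div 4 + 3 else n\<^sup>2 div 4 + 2)"
proof -
  define M where "M = (if n = 3 \<or> n = 4 then n\<^sup>2 div 4 + 2 else n\<^sup>2 div 4 + 1)"
  have rhs: "(if n = 3 \<or> n = 4 then n\<^sup>2 div 4 + 3 else n\<^sup>2 div 4 + 2) = M + 1" by (simp add: M_def)
  have up: "\<And>C. \<not> has_rainbow_triangle n C \<Longrightarrow> num_colors n C \<le> M"
    using upper[OF assms] unfolding M_def by blast
  obtain C0 where C0: "\<not> has_rainbow_triangle n C0" "M \<le> num_colors n C0"
    using lower[OF assms] unfolding M_def by blast
  have "f_rainbow n = M + 1"
    unfolding f_rainbow_def
  proof (rule Least_equality)
    show "\<forall>C. M + 1 \<le> num_colors n C \<longrightarrow> has_rainbow_triangle n C"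
    proof (intro allI impI)
      fix C assume "M + 1 \<le> num_colors n C"
      then show "has_rainbow_triangle n C" using up[of C] by linarith
    qed
  next
    fix k assume k: "\<forall>C. k \<le> num_colors n C \<longrightarrow> has_rainbow_triangle n C"
    show "M + 1 \<le> k"
    proof (rule ccontr)
      assume "\<not> M + 1 \<le> k"
      then have "k \<le> num_colors n C0" using C0 by linarith
      then show False using k C0 by blast
    qed
  qed
  then show ?thesis using rhs by simp
qed

end
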